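(* For each $n\in\mathbb N$, $$1\le\liminf_{x\to+\infty}\frac{\mathbb P^T_n(x)}{\mathrm{Diag}\,\mathbb P(x)}\le\limsup_{x\to+\infty}\frac{\mathbb P^T_n(x)}{\mathrm{Diag}\,\mathbb P(x)}\le2.$$ In particular, $\mathrm{Diag}\,\mathbb P(x)=\Theta\left(\mathbb P^T_n(x)\right)$ as $x\to+\infty$.
   Context: Let $p_n$ denote the $n$-th prime number. Define $p^{(0)}_n=n$ and recursively $p^{(k+1)}_n=p_{p^{(k)}_n}$ for $k\in\mathbb N_0$. Let $\mathbb P^T_n=\{p^{(k)}_n:k\in\mathbb N\}$ and $\mathrm{Diag}\,\mathbb P=\{p^{(k)}_k:k\in\mathbb N\}$. For $A\subset\mathbb N$ and $x\ge1$, $A(x)=\#\{a\le x:a\in A\}$. *)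

theory Defs
  imports "HOL-Analysis.Analysis" "HOL-Computational_Algebra.Primes" "HOL-Library.Landau_Symbols"
begin

text \<open>The n-th prime p_n, 1-indexed: nth_prime 1 = 2, nth_prime 2 = 3, ...
  (the value at 0 is irrelevant and never used).\<close>
definition nth_prime :: "nat \<Rightarrow> nat" where
  "nth_prime n = enumerate {p::nat. prime p} (n - 1)"

definition iter_prime :: "nat \<Rightarrow> nat \<Rightarrow> nat" where
  "iter_prime k n = (nth_prime ^^ k) n"

definition PT :: "nat \<Rightarrow> nat set" where
  "PT n = {iter_prime k n | k. k \<ge> 1}"

definition DiagP :: "nat set" where
  "DiagP = {iter_prime k k | k. k \<ge> 1}"

definition count_le :: "nat set \<Rightarrow> real \<Rightarrow> nat" where
  "count_le A x = card {a \<in> A. real a \<le> x}"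

end

theory Submission
  imports Defs
begin

lemma primes_inf: "infinite {p::nat. prime p}"
  using primes_infinite by simp

lemma enum_ge: "j + 2 \<le> enumerate {p::nat. prime p} j"
proof (induction j)
  case 0
  have "prime (enumerate {p::nat. prime p} 0)" using enumerate_in_set[OF primes_inf] by simp
  then have "2 \<le> enumerate {p::nat. prime p} 0" by (rule prime_ge_2_nat)
  then show ?case by simp
next
  case (Suc j)
  then show ?case using enumerate_step[OF primes_inf, of j] by simp
qed

lemma np_gt: "m < nth_prime m"
  unfolding nth_prime_def using enum_ge[of "m - 1"] by simp

lemma np_mono: "m \<le> m' \<Longrightarrow> nth_prime m \<le> nth_prime m'"
  unfolding nth_prime_def using primes_inf by simp

lemma iter_Suc: "iter_prime (Suc k) n = nth_prime (iter_prime k n)"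
  unfolding iter_prime_def by simp

lemma iter_mono_arg: "m \<le> m' \<Longrightarrow> iter_prime k m \<le> iter_prime k m'"
  by (induction k) (auto simp: iter_Suc np_mono iter_prime_def[of 0])

lemma iter_ge: "k + n \<le> iter_prime k n"
proof (induction k)
  case 0 then show ?case by (simp add: iter_prime_def)
next
  case (Suc k) then show ?case using np_gt[of "iter_prime k n"] by (simp add: iter_Suc)
qed

lemma iter_smono: "strict_mono (\<lambda>k. iter_prime k n)"
  by (rule strict_mono_Suc_iff[THEN iffD2]) (simp add: iter_Suc np_gt)

lemma diag_smono: "strict_mono (\<lambda>k. iter_prime k k)"
proof (rule strict_mono_Suc_iff[THEN iffD2], intro allI)
  fix k
  have "iter_prime k k < iter_prime (Suc k) k" by (simp add: iter_Suc np_gt)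
  also have "\<dots> \<le> iter_prime (Suc k) (Suc k)" by (rule iter_mono_arg) simp
  finally show "iter_prime k k < iter_prime (Suc k) (Suc k)" .
qed

lemma iter_le_k: "j \<le> k \<Longrightarrow> iter_prime j n \<le> iter_prime k n"
  using strict_mono_less_eq[OF iter_smono[of n]] by blast

lemma iter_add: "iter_prime (j + k) n = iter_prime j (iter_prime k n)"
  unfolding iter_prime_def by (simp add: funpow_add)

lemma count_PT: "count_le (PT n) x = card {k. 1 \<le> k \<and> real (iter_prime k n) \<le> x}"
proof -
  have "{a \<in> PT n. real a \<le> x} = (\<lambda>k. iter_prime k n) ` {k. 1 \<le> k \<and> real (iter_prime k n) \<le> x}"
    unfolding PT_def by auto
  moreover have "inj_on (\<lambda>k. iter_prime k n) {k. 1 \<le> k \<and> real (iter_prime k n) \<le> x}"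
    using strict_mono_imp_inj_on[OF iter_smono] by (meson inj_on_subset subset_UNIV)
  ultimately show ?thesis unfolding count_le_def by (simp add: card_image)
qed

lemma count_Diag: "count_le DiagP x = card {k. 1 \<le> k \<and> real (iter_prime k k) \<le> x}"
proof -
  have "{a \<in> DiagP. real a \<le> x} = (\<lambda>k. iter_prime k k) ` {k. 1 \<le> k \<and> real (iter_prime k k) \<le> x}"
    unfolding DiagP_def by auto
  moreover have "inj_on (\<lambda>k. iter_prime k k) {k. 1 \<le> k \<and> real (iter_prime k k) \<le> x}"
    using strict_mono_imp_inj_on[OF diag_smono] by (meson inj_on_subset subset_UNIV)
  ultimately show ?thesis unfolding count_le_def by (simp add: card_image)
qed

lemma finA: "finite {k. 1 \<le> k \<and> real (iter_prime k n) \<le> x}"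
proof (rule finite_subset[of _ "{..nat \<lceil>x\<rceil>}"])
  show "{k. 1 \<le> k \<and> real (iter_prime k n) \<le> x} \<subseteq> {..nat \<lceil>x\<rceil>}"
  proof
    fix k assume "k \<in> {k. 1 \<le> k \<and> real (iter_prime k n) \<le> x}"
    then have "real k \<le> x" using iter_ge[of k n] by auto
    then show "k \<in> {..nat \<lceil>x\<rceil>}" by auto linarith
  qed
qed simp

lemma finB: "finite {k. 1 \<le> k \<and> real (iter_prime k k) \<le> x}"
proof (rule finite_subset[of _ "{..nat \<lceil>x\<rceil>}"])
  show "{k. 1 \<le> k \<and> real (iter_prime k k) \<le> x} \<subseteq> {..nat \<lceil>x\<rceil>}"
  proof
    fix k assume "k \<in> {k. 1 \<le> k \<and> real (iter_prime k k) \<le> x}"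
    then have "real k \<le> x" using iter_ge[of k k] by auto
    then show "k \<in> {..nat \<lceil>x\<rceil>}" by auto linarith
  qed
qed simp

lemmas finA' = finA[simplified]
lemmas finB' = finB[simplified]

lemma D_le: "count_le DiagP x \<le> count_le (PT n) x + n"
proof -
  let ?A = "{k. 1 \<le> k \<and> real (iter_prime k n) \<le> x}"
  let ?B = "{k. 1 \<le> k \<and> real (iter_prime k k) \<le> x}"
  have "?B \<subseteq> ?A \<union> {..<n}"
  proof
    fix k assume k: "k \<in> ?B"
    show "k \<in> ?A \<union> {..<n}"
    proof (cases "k < n")
      case False
      then have "iter_prime k n \<le> iter_prime k k" by (intro iter_mono_arg) simp
      then show ?thesis using k by auto
    qed simp
  qed
  then have "card ?B \<le> card (?A \<union> {..<n})" by (rule card_mono[OF finite_UnI[OF finA finite_lessThan]])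
  also have "\<dots> \<le> card ?A + card {..<n}" by (rule card_Un_le)
  finally show ?thesis by (simp add: count_PT count_Diag)
qed

lemma P_le: "count_le (PT n) x \<le> 2 * count_le DiagP x + 2"
proof -
  let ?A = "{k. 1 \<le> k \<and> real (iter_prime k n) \<le> x}"
  let ?B = "{k. 1 \<le> k \<and> real (iter_prime k k) \<le> x}"
  have "?A \<subseteq> (\<Union>j\<in>insert 0 ?B. {2*j, 2*j+1})"
  proof
    fix k assume k: "k \<in> ?A"
    define j where "j = k div 2"
    have kj: "k = 2*j \<or> k = 2*j+1" unfolding j_def by auto
    have "j \<in> insert 0 ?B"
    proof (cases "j = 0")
      case False
      have "iter_prime j j \<le> iter_prime j (iter_prime j n)"
        using iter_ge[of j n] by (intro iter_mono_arg) simp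
      also have "\<dots> = iter_prime (j + j) n" by (simp add: iter_add)
      also have "\<dots> \<le> iter_prime k n"
        using iter_le_k[of "j+j" k n] kj by auto
      finally show ?thesis using k False by auto
    qed simp
    then show "k \<in> (\<Union>j\<in>insert 0 ?B. {2*j, 2*j+1})" using kj by blast
  qed
  then have "card ?A \<le> card (\<Union>j\<in>insert 0 ?B. {2*j, 2*j+1})"
    by (rule card_mono[rotated]) (intro finite_UN_I finite.insertI finB finite.emptyI)
  also have "\<dots> \<le> (\<Sum>j\<in>insert 0 ?B. card {2*j, 2*j+(1::nat)})"
    by (rule card_UN_le) (simp add: finB')
  also have "\<dots> = (\<Sum>j\<in>insert 0 ?B. 2)" by simp
  also have "\<dots> = 2 * card (insert 0 ?B)" using finB by simp
  also have "\<dots> \<le> 2 * (card ?B + 1)"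
  proof -
    have "card (insert 0 ?B) \<le> Suc (card ?B)" by (rule card_insert_le_m1) auto
    then show ?thesis by simp
  qed
  finally show ?thesis by (simp add: count_PT count_Diag)
qed

lemma P_inf: "filterlim (\<lambda>x::real. real (count_le (PT n) x)) at_top at_top"
proof (subst filterlim_at_top, intro allI)
  fix Z :: real
  define M where "M = nat \<lceil>Z\<rceil> + 1"
  have "eventually (\<lambda>x::real. real (iter_prime M n) \<le> x) at_top" by (rule eventually_ge_at_top)
  then show "eventually (\<lambda>x. Z \<le> real (count_le (PT n) x)) at_top"
  proof (rule eventually_mono)
    fix x :: real assume x: "real (iter_prime M n) \<le> x"
    have "{1..M} \<subseteq> {k. 1 \<le> k \<and> real (iter_prime k n) \<le> x}"
    proof
      fix k assume "k \<in> {1..M}"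
      then have "iter_prime k n \<le> iter_prime M n"
        using iter_le_k[of k M n] by auto
      then show "k \<in> {k. 1 \<le> k \<and> real (iter_prime k n) \<le> x}" using x \<open>k \<in> {1..M}\<close> by auto
    qed
    then have "card {1..M} \<le> count_le (PT n) x" unfolding count_PT
      by (rule card_mono[OF finA])
    then have "M \<le> count_le (PT n) x" by simp
    then show "Z \<le> real (count_le (PT n) x)" unfolding M_def by linarith
  qed
qed

lemma D_inf: "filterlim (\<lambda>x::real. real (count_le DiagP x)) at_top at_top"
proof (subst filterlim_at_top, intro allI)
  fix Z :: real
  have "eventually (\<lambda>x. 2 * Z + 2 \<le> real (count_le (PT n) x)) at_top"
    using P_inf[of n] unfolding filterlim_at_top by blast
  then show "eventually (\<lambda>x. Z \<le> real (count_le DiagP x)) at_top"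
  proof (rule eventually_mono)
    fix x assume "2 * Z + 2 \<le> real (count_le (PT n) x)"
    moreover have "real (count_le (PT n) x) \<le> 2 * real (count_le DiagP x) + 2"
      using P_le[of n x] by linarith
    ultimately show "Z \<le> real (count_le DiagP x)" by linarith
  qed
qed

theorem theorem17:
  fixes n :: nat
  assumes "n \<ge> 1"
  shows "1 \<le> Liminf at_top (\<lambda>x::real. ereal (real (count_le (PT n) x) / real (count_le DiagP x)))
       \<and> Liminf at_top (\<lambda>x::real. ereal (real (count_le (PT n) x) / real (count_le DiagP x)))
           \<le> Limsup at_top (\<lambda>x::real. ereal (real (count_le (PT n) x) / real (count_le DiagP x)))
       \<and> Limsup at_top (\<lambda>x::real. ereal (real (count_le (PT n) x) / real (count_le DiagP x))) \<le> 2
       \<and> (\<lambda>x::real. real (count_le DiagP x)) \<in> \<Theta>(\<lambda>x::real. real (count_le (PT n) x))"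
proof -
  define P where "P = (\<lambda>x::real. real (count_le (PT n) x))"
  define D where "D = (\<lambda>x::real. real (count_le DiagP x))"
  have DP: "D x \<le> P x + real n" for x
    unfolding D_def P_def using D_le[of x n] by linarith
  have PD: "P x \<le> 2 * D x + 2" for x
    unfolding D_def P_def using P_le[of n x] by linarith
  have Dinf: "filterlim D at_top at_top" unfolding D_def by (rule D_inf)
  have Pinf: "filterlim P at_top at_top" unfolding P_def by (rule P_inf)
  have evD: "eventually (\<lambda>x. D x \<ge> 1) at_top" using Dinf unfolding filterlim_at_top by blast
  have evP: "eventually (\<lambda>x. P x \<ge> 1) at_top" using Pinf unfolding filterlim_at_top by blast
  have Dinf': "filterlim D at_infinity at_top" by (rule filterlim_at_top_imp_at_infinity[OF Dinf])
  have t1: "((\<lambda>x. real n / D x) \<longlongrightarrow> 0) at_top"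
    by (rule tendsto_divide_0[OF tendsto_const Dinf'])
  have t2: "((\<lambda>x. 2 / D x) \<longlongrightarrow> 0) at_top"
    by (rule tendsto_divide_0[OF tendsto_const Dinf'])
  have L1: "((\<lambda>x. ereal (1 - real n / D x)) \<longlongrightarrow> ereal 1) at_top"
    unfolding lim_ereal using tendsto_diff[OF tendsto_const t1, of 1] by simp
  have L2: "((\<lambda>x. ereal (2 + 2 / D x)) \<longlongrightarrow> ereal 2) at_top"
    unfolding lim_ereal using tendsto_add[OF tendsto_const t2, of 2] by simp
  have "eventually (\<lambda>x. ereal (1 - real n / D x) \<le> ereal (P x / D x)) at_top"
    using evD
  proof (rule eventually_mono)
    fix x assume d: "D x \<ge> 1"
    have "1 - real n / D x = (D x - real n) / D x" using d by (simp add: field_simps)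
    also have "\<dots> \<le> P x / D x" using d DP[of x] by (intro divide_right_mono) auto
    finally show "ereal (1 - real n / D x) \<le> ereal (P x / D x)" by simp
  qed
  then have "Liminf at_top (\<lambda>x. ereal (1 - real n / D x)) \<le> Liminf at_top (\<lambda>x. ereal (P x / D x))"
    by (rule Liminf_mono)
  moreover have "Liminf at_top (\<lambda>x. ereal (1 - real n / D x)) = 1"
    using lim_imp_Liminf[OF trivial_limit_at_top_linorder L1] by simp
  ultimately have A1: "1 \<le> Liminf at_top (\<lambda>x. ereal (P x / D x))" by simp
  have "eventually (\<lambda>x. ereal (P x / D x) \<le> ereal (2 + 2 / D x)) at_top"
    using evD
  proof (rule eventually_mono)
    fix x assume d: "D x \<ge> 1"
    have "P x / D x \<le> (2 * D x + 2) / D x" using d PD[of x] by (intro divide_right_mono) auto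
    also have "\<dots> = 2 + 2 / D x" using d by (simp add: field_simps)
    finally show "ereal (P x / D x) \<le> ereal (2 + 2 / D x)" by simp
  qed
  then have "Limsup at_top (\<lambda>x. ereal (P x / D x)) \<le> Limsup at_top (\<lambda>x. ereal (2 + 2 / D x))"
    by (rule Limsup_mono)
  moreover have "Limsup at_top (\<lambda>x. ereal (2 + 2 / D x)) = 2"
    using lim_imp_Limsup[OF trivial_limit_at_top_linorder L2] by simp
  ultimately have A3: "Limsup at_top (\<lambda>x. ereal (P x / D x)) \<le> 2" by simp
  have A2: "Liminf at_top (\<lambda>x. ereal (P x / D x)) \<le> Limsup at_top (\<lambda>x. ereal (P x / D x))"
    by (rule Liminf_le_Limsup[OF trivial_limit_at_top_linorder])
  have A4: "D \<in> \<Theta>(P)"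
  proof (rule bigthetaI'[of "1/4" "real n + 1"])
    show "eventually (\<lambda>x. 1/4 * norm (P x) \<le> norm (D x) \<and> norm (D x) \<le> (real n + 1) * norm (P x)) at_top"
      using eventually_conj[OF evD evP]
    proof (rule eventually_mono)
      fix x assume dp: "D x \<ge> 1 \<and> P x \<ge> 1"
      then have d: "D x \<ge> 1" and p: "P x \<ge> 1" by auto
      have "1/4 * P x \<le> D x" using PD[of x] d by linarith
      moreover have "real n * 1 \<le> real n * P x" using p by (intro mult_left_mono) auto
      then have "D x \<le> (real n + 1) * P x" using DP[of x] by (simp add: algebra_simps)
      ultimately show "1/4 * norm (P x) \<le> norm (D x) \<and> norm (D x) \<le> (real n + 1) * norm (P x)"
        using d p by simp
    qed
  qed auto
  show ?thesis using A1 A2 A3 A4 unfolding P_def D_def by blast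
qed

end
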